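(* With $F_1=1+5x-8x^2+x^3$, $G_0=1-x+x^2$, $G_1=1-235x+1430x^2-1695x^3+270x^4+229x^5+x^6$ and $\Phi_3(x)=\dfrac{1728x(x-1)F_1^7}{G_0^3G_1^3}$, in a neighborhood of $x=0$ (radical factors equal to $1$ at $x=0$): $${}_3F_2\!\left(-\tfrac1{14},\tfrac{11}{42},\tfrac{25}{42};\tfrac47,\tfrac57;\Phi_3\right)=(1-3x)(1-x)^{3/7}G_0^{-3/14}G_1^{-3/14},$$ $${}_3F_2\!\left(\tfrac3{14},\tfrac{23}{42},\tfrac{37}{42};\tfrac67,\tfrac97;\Phi_3\right)=\left(1-\tfrac{2x}{3}\right)(1-x)^{-2/7}F_1^{-2}G_0^{9/14}G_1^{9/14},$$ $${}_3F_2\!\left(\tfrac5{14},\tfrac{29}{42},\tfrac{43}{42};\tfrac87,\tfrac{10}7;\Phi_3\right)=\left(1+\tfrac{x}{2}\right)(1-x)^{-1/7}F_1^{-3}G_0^{15/14}G_1^{15/14}.$$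
   Context: ${}_3F_2(\alpha_1,\alpha_2,\alpha_3;\beta_1,\beta_2;z)=\sum_{n\ge0}\frac{(\alpha_1)_n(\alpha_2)_n(\alpha_3)_n}{(\beta_1)_n(\beta_2)_n n!}z^n$. *)

theory Defs
  imports "HOL-Analysis.Analysis"
begin

definition hyp3F2 :: "real \<Rightarrow> real \<Rightarrow> real \<Rightarrow> real \<Rightarrow> real \<Rightarrow> real \<Rightarrow> real" where
  "hyp3F2 a1 a2 a3 b1 b2 z =
     (\<Sum>n. pochhammer a1 n * pochhammer a2 n * pochhammer a3 n
            / (pochhammer b1 n * pochhammer b2 n * fact n) * z ^ n)"

definition F1 :: "real \<Rightarrow> real" where "F1 x = 1 + 5*x - 8*x^2 + x^3"
definition G0 :: "real \<Rightarrow> real" where "G0 x = 1 - x + x^2"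
definition G1 :: "real \<Rightarrow> real" where
  "G1 x = 1 - 235*x + 1430*x^2 - 1695*x^3 + 270*x^4 + 229*x^5 + x^6"
definition Phi3 :: "real \<Rightarrow> real" where
  "Phi3 x = 1728 * x * (x - 1) * F1 x ^ 7 / (G0 x ^ 3 * G1 x ^ 3)"

end

theory Submission
  imports Defs "HOL-Complex_Analysis.Complex_Analysis"
begin
fun padd :: "int list \<Rightarrow> int list \<Rightarrow> int list" where
 "padd [] ys = ys" | "padd xs [] = xs" | "padd (x#xs) (y#ys) = (x+y) # padd xs ys"
definition psc :: "int \<Rightarrow> int list \<Rightarrow> int list" where "psc c xs = map (\<lambda>x. c*x) xs"
definition psub :: "int list \<Rightarrow> int list \<Rightarrow> int list" where "psub xs ys = padd xs (psc (-1) ys)"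
fun pmul :: "int list \<Rightarrow> int list \<Rightarrow> int list" where
 "pmul [] ys = []" | "pmul (x#xs) ys = padd (psc x ys) (0 # pmul xs ys)"
fun ppow :: "int list \<Rightarrow> nat \<Rightarrow> int list" where
 "ppow xs 0 = [1]" | "ppow xs (Suc n) = pmul xs (ppow xs n)"
fun pder :: "int list \<Rightarrow> int list" where
 "pder [] = []" | "pder (x#xs) = padd xs (0 # pder xs)"
fun pzero :: "int list \<Rightarrow> bool" where "pzero [] = True" | "pzero (x#xs) = (x = 0 \<and> pzero xs)"

fun ev :: "int list \<Rightarrow> complex fps" where
 "ev [] = 0" | "ev (x#xs) = fps_const (of_int x) + fps_X * ev xs"
fun evf :: "int list \<Rightarrow> complex \<Rightarrow> complex" where
 "evf [] z = 0" | "evf (x#xs) z = of_int x + z * evf xs z"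
fun evr :: "int list \<Rightarrow> real \<Rightarrow> real" where
 "evr [] z = 0" | "evr (x#xs) z = of_int x + z * evr xs z"

lemma ev_padd[simp]: "ev (padd xs ys) = ev xs + ev ys"
  by (induction xs ys rule: padd.induct) (auto simp: algebra_simps fps_const_add[symmetric] simp del: fps_const_add)
lemma ev_psc[simp]: "ev (psc c xs) = fps_const (of_int c) * ev xs"
  by (induction xs) (auto simp: psc_def algebra_simps fps_const_mult[symmetric] simp del: fps_const_mult)
lemma ev_psub[simp]: "ev (psub xs ys) = ev xs - ev ys"
  by (simp add: psub_def fps_const_neg[symmetric] del: fps_const_neg)
lemma ev_pmul[simp]: "ev (pmul xs ys) = ev xs * ev ys"
  by (induction xs) (auto simp: algebra_simps)
lemma ev_ppow[simp]: "ev (ppow xs n) = ev xs ^ n"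
  by (induction n) auto
lemma ev_pder[simp]: "ev (pder xs) = fps_deriv (ev xs)"
  by (induction xs) (auto simp: algebra_simps)
lemma ev_pzero: "pzero xs \<Longrightarrow> ev xs = 0"
  by (induction xs) auto
lemma ev_nth0: "ev xs $ 0 = of_int (hd (xs @ [0]))"
  by (cases xs) auto

lemma evf_padd[simp]: "evf (padd xs ys) z = evf xs z + evf ys z"
  by (induction xs ys rule: padd.induct) (auto simp: algebra_simps)
lemma evf_psc[simp]: "evf (psc c xs) z = of_int c * evf xs z"
  by (induction xs) (auto simp: psc_def algebra_simps)
lemma evf_psub[simp]: "evf (psub xs ys) z = evf xs z - evf ys z"
  by (simp add: psub_def)
lemma evf_pmul[simp]: "evf (pmul xs ys) z = evf xs z * evf ys z"
  by (induction xs) (auto simp: algebra_simps)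
lemma evf_ppow[simp]: "evf (ppow xs n) z = evf xs z ^ n"
  by (induction n) auto
lemma evr_padd[simp]: "evr (padd xs ys) z = evr xs z + evr ys z"
  by (induction xs ys rule: padd.induct) (auto simp: algebra_simps)
lemma evr_psc[simp]: "evr (psc c xs) z = of_int c * evr xs z"
  by (induction xs) (auto simp: psc_def algebra_simps)
lemma evr_psub[simp]: "evr (psub xs ys) z = evr xs z - evr ys z"
  by (simp add: psub_def)
lemma evr_pmul[simp]: "evr (pmul xs ys) z = evr xs z * evr ys z"
  by (induction xs) (auto simp: algebra_simps)
lemma evr_ppow[simp]: "evr (ppow xs n) z = evr xs z ^ n"
  by (induction n) auto
lemma evf_of_real: "evf xs (of_real x) = of_real (evr xs x)"
  by (induction xs) auto
lemma evf_expansion: "evf xs has_fps_expansion ev xs"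
proof (induction xs)
  case Nil then show ?case by simp
next
  case (Cons x xs)
  have "(\<lambda>z. of_int x + z * evf xs z) has_fps_expansion fps_const (of_int x) + fps_X * ev xs"
    by (intro fps_expansion_intros Cons)
  then show ?case by simp
qed
lemma evf_cont: "continuous_on UNIV (evf xs)"
  by (induction xs) (auto intro!: continuous_intros)
lemma evr_cont: "continuous_on UNIV (evr xs)"
  by (induction xs) (auto intro!: continuous_intros)
lemma evf_0: "evf xs 0 = of_int (hd (xs @ [0]))"
  by (cases xs) auto
lemma evr_0: "evr xs 0 = of_int (hd (xs @ [0]))"
  by (cases xs) auto

definition theta :: "complex fps \<Rightarrow> complex fps" where "theta F = fps_X * fps_deriv F"

definition Eop :: "(complex fps \<Rightarrow> complex fps) \<Rightarrow> complex fps \<Rightarrow> complex \<Rightarrow> complex \<Rightarrow> complex \<Rightarrow> complex \<Rightarrow> complex \<Rightarrow> complex fps \<Rightarrow> complex fps" where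
  "Eop T P be ga s1 s2 s3 F = T (T (T F)) + fps_const be * T (T F) + fps_const ga * T F
      - P * (T (T (T F)) + fps_const s1 * T (T F) + fps_const s2 * T F + fps_const s3 * F)"

lemma theta_nth[simp]: "theta F $ n = of_nat n * F $ n"
  by (simp add: theta_def)

definition coef :: "real \<Rightarrow> real \<Rightarrow> real \<Rightarrow> real \<Rightarrow> real \<Rightarrow> nat \<Rightarrow> real" where
  "coef a1 a2 a3 b1 b2 n = pochhammer a1 n * pochhammer a2 n * pochhammer a3 n
            / (pochhammer b1 n * pochhammer b2 n * fact n)"

definition Hc :: "real \<Rightarrow> real \<Rightarrow> real \<Rightarrow> real \<Rightarrow> real \<Rightarrow> complex fps" where
  "Hc a1 a2 a3 b1 b2 = Abs_fps (\<lambda>n. of_real (coef a1 a2 a3 b1 b2 n))"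

lemma pochhammer_pos: "b > 0 \<Longrightarrow> pochhammer (b::real) n > 0"
  by (simp add: pochhammer_pos)

lemma coef_Suc:
  assumes "b1 > 0" "b2 > 0"
  shows "coef a1 a2 a3 b1 b2 (Suc m) * ((b1 + m) * (b2 + m) * (m + 1))
       = coef a1 a2 a3 b1 b2 m * ((a1 + m) * (a2 + m) * (a3 + m))"
proof -
  have p1: "pochhammer b1 m > 0" "pochhammer b2 m > 0" using assms by (auto intro: pochhammer_pos)
  have q: "b1 + m > 0" "b2 + m > 0" using assms by auto
  have f: "fact m > (0::real)" by simp
  have gen: "\<And>A al B be. B \<noteq> (0::real) \<Longrightarrow> be \<noteq> 0 \<Longrightarrow> (A * al) / (B * be) * be = A / B * al"
    by simp
  have "coef a1 a2 a3 b1 b2 (Suc m) = (pochhammer a1 m * pochhammer a2 m * pochhammer a3 m * ((a1 + m) * (a2 + m) * (a3 + m)))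
      / ((pochhammer b1 m * pochhammer b2 m * fact m) * ((b1 + m) * (b2 + m) * (m + 1)))"
    unfolding coef_def pochhammer_Suc fact_Suc by (simp add: algebra_simps)
  also have "\<dots> * ((b1 + m) * (b2 + m) * (m + 1)) = coef a1 a2 a3 b1 b2 m * ((a1 + m) * (a2 + m) * (a3 + m))"
    unfolding coef_def using p1 q f by (subst gen) auto
  finally show ?thesis .
qed

lemma HE_zero:
  assumes "b1 > 0" "b2 > 0"
  defines "e1 \<equiv> b1 - 1" and "e2 \<equiv> b2 - 1"
  shows "Eop theta fps_X (of_real (e1+e2)) (of_real (e1*e2)) (of_real (a1+a2+a3))
           (of_real (a1*a2+a1*a3+a2*a3)) (of_real (a1*a2*a3)) (Hc a1 a2 a3 b1 b2) = 0"
proof (rule fps_ext)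
  fix n
  let ?c = "coef a1 a2 a3 b1 b2"
  show "Eop theta fps_X (of_real (e1+e2)) (of_real (e1*e2)) (of_real (a1+a2+a3))
           (of_real (a1*a2+a1*a3+a2*a3)) (of_real (a1*a2*a3)) (Hc a1 a2 a3 b1 b2) $ n = 0 $ n"
  proof (cases n)
    case 0 then show ?thesis by (simp add: Eop_def Hc_def)
  next
    case (Suc m)
    have "?c (Suc m) * ((b1 + m) * (b2 + m) * (m + 1)) = ?c m * ((a1 + m) * (a2 + m) * (a3 + m))"
      by (rule coef_Suc[OF assms(1,2)])
    then have "complex_of_real (?c (Suc m) * ((b1 + m) * (b2 + m) * (m + 1))) = of_real (?c m * ((a1 + m) * (a2 + m) * (a3 + m)))"
      by simp
    then show ?thesis using Suc
      by (simp add: Eop_def Hc_def e1_def e2_def algebra_simps)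
  qed
qed

lemma compose_T:
  fixes P V :: "complex fps"
  assumes P0: "P $ 0 = 0" and VP: "V * fps_deriv P = P"
  shows "V * fps_deriv (F oo P) = theta F oo P"
proof -
  have "V * fps_deriv (F oo P) = (fps_deriv F oo P) * (V * fps_deriv P)"
    by (simp add: fps_compose_deriv[OF P0] algebra_simps)
  also have "\<dots> = (fps_deriv F oo P) * (fps_X oo P)" using VP P0 by simp
  also have "\<dots> = theta F oo P" by (simp add: theta_def fps_compose_mult_distrib[OF P0] mult.commute)
  finally show ?thesis .
qed

lemma compose_Eop:
  fixes P V :: "complex fps"
  assumes P0: "P $ 0 = 0" and VP: "V * fps_deriv P = P"
  shows "Eop (\<lambda>G. V * fps_deriv G) P be ga s1 s2 s3 (F oo P) = Eop theta fps_X be ga s1 s2 s3 F oo P"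
  unfolding Eop_def
  by (simp add: compose_T[OF assms] fps_compose_add_distrib fps_compose_sub_distrib
        fps_compose_mult_distrib[OF P0] P0)

lemma T_low:
  fixes V F :: "complex fps"
  assumes V0: "V $ 0 = 0" and low: "\<forall>j<m. F $ j = 0"
  shows "\<forall>j<m. (V * fps_deriv F) $ j = 0"
proof (intro allI impI)
  fix j assume j: "j < m"
  have "(V * fps_deriv F) $ j = (\<Sum>i=0..j. V$i * fps_deriv F $ (j - i))" by (simp add: fps_mult_nth)
  also have "\<dots> = 0"
  proof (rule sum.neutral, intro ballI)
    fix i assume i: "i \<in> {0..j}"
    show "V$i * fps_deriv F $ (j - i) = 0"
    proof (cases "i = 0")
      case True then show ?thesis using V0 by simp
    next
      case False then have "j - i + 1 < m" using i j by auto
      then show ?thesis using low by simp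
    qed
  qed
  finally show "(V * fps_deriv F) $ j = 0" .
qed

lemma T_diag:
  fixes V F :: "complex fps"
  assumes V0: "V $ 0 = 0" and V1: "V $ 1 = 1" and low: "\<forall>j<m. F $ j = 0"
  shows "(V * fps_deriv F) $ m = of_nat m * F $ m"
proof (cases m)
  case 0 then show ?thesis using V0 by simp
next
  case (Suc k)
  have "(V * fps_deriv F) $ m = (\<Sum>i=0..m. V$i * fps_deriv F $ (m - i))" by (simp add: fps_mult_nth)
  also have "\<dots> = (\<Sum>i\<in>{1}. V$i * fps_deriv F $ (m - i))"
  proof (rule sum.mono_neutral_left[symmetric])
    show "\<forall>i\<in>{0..m} - {1}. V$i * fps_deriv F $ (m - i) = 0"
    proof
      fix i assume i: "i \<in> {0..m} - {1}"
      show "V$i * fps_deriv F $ (m - i) = 0"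
      proof (cases "i = 0")
        case True then show ?thesis using V0 by simp
      next
        case False then have "m - i + 1 < m" using i Suc by auto
        then show ?thesis using low by simp
      qed
    qed
  qed (use Suc in auto)
  also have "\<dots> = V$1 * fps_deriv F $ (m - 1)" by simp
  also have "\<dots> = of_nat m * F $ m" using V1 Suc by simp
  finally show ?thesis .
qed

lemma T_low_diag:
  fixes V F :: "complex fps"
  assumes V0: "V $ 0 = 0" and V1: "V $ 1 = 1" and low: "\<forall>j<m. F $ j = 0"
  shows "(\<forall>j<m. (V * fps_deriv F) $ j = 0) \<and> (V * fps_deriv F) $ m = of_nat m * F $ m"
  using T_low[OF V0 low] T_diag[OF V0 V1 low] by blast

lemma P_low:
  fixes P G :: "complex fps"
  assumes P0: "P $ 0 = 0" and low: "\<forall>j<m. G $ j = 0"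
  shows "(P * G) $ m = 0"
proof -
  have "(P * G) $ m = (\<Sum>i=0..m. P$i * G $ (m - i))" by (simp add: fps_mult_nth)
  also have "\<dots> = 0"
  proof (rule sum.neutral, intro ballI)
    fix i assume i: "i \<in> {0..m}"
    show "P$i * G $ (m - i) = 0"
    proof (cases "i = 0")
      case True then show ?thesis using P0 by simp
    next
      case False then have "m - i < m" using i by auto
      then show ?thesis using low by simp
    qed
  qed
  finally show ?thesis .
qed

lemma Eop_unique:
  fixes V P D :: "complex fps" and e1 e2 :: real
  assumes V0: "V $ 0 = 0" and V1: "V $ 1 = 1" and P0: "P $ 0 = 0"
    and e1: "e1 > -1" and e2: "e2 > -1"
    and E: "Eop (\<lambda>G. V * fps_deriv G) P (of_real (e1+e2)) (of_real (e1*e2)) s1 s2 s3 D = 0"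
    and D0: "D $ 0 = 0"
  shows "D = 0"
proof (rule ccontr)
  assume nz: "D \<noteq> 0"
  define m where "m = subdegree D"
  have "m \<noteq> 0"
  proof
    assume "m = 0"
    then have sd: "subdegree D = 0" unfolding m_def .
    have "D $ subdegree D \<noteq> 0" by (rule nth_subdegree_nonzero[OF nz])
    then have "D $ 0 \<noteq> 0" unfolding sd .
    then show False using D0 by contradiction
  qed
  then have m1: "m \<ge> 1" by simp
  have low: "\<forall>j<m. D $ j = 0" unfolding m_def using nth_less_subdegree_zero by blast
  have dm: "D $ m \<noteq> 0" unfolding m_def by (rule nth_subdegree_nonzero[OF nz])
  define T1 where "T1 = V * fps_deriv D"
  define T2 where "T2 = V * fps_deriv T1"
  define T3 where "T3 = V * fps_deriv T2"
  note TLD = T_low_diag[OF V0 V1]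
  have 1: "(\<forall>j<m. T1 $ j = 0) \<and> T1 $ m = of_nat m * D $ m" unfolding T1_def using TLD[OF low] .
  have 2: "(\<forall>j<m. T2 $ j = 0) \<and> T2 $ m = of_nat m * T1 $ m" unfolding T2_def
    using TLD[OF conjunct1[OF 1]] .
  have 3: "(\<forall>j<m. T3 $ j = 0) \<and> T3 $ m = of_nat m * T2 $ m" unfolding T3_def
    using TLD[OF conjunct1[OF 2]] .
  have low4: "\<forall>j<m. (T3 + fps_const s1 * T2 + fps_const s2 * T1 + fps_const s3 * D) $ j = 0"
    using 1 2 3 low by simp
  have Pm: "(P * (T3 + fps_const s1 * T2 + fps_const s2 * T1 + fps_const s3 * D)) $ m = 0"
    by (rule P_low[OF P0 low4])
  have Ed: "Eop (\<lambda>G. V * fps_deriv G) P (of_real (e1+e2)) (of_real (e1*e2)) s1 s2 s3 D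
     = T3 + fps_const (of_real (e1+e2)) * T2 + fps_const (of_real (e1*e2)) * T1
      - P * (T3 + fps_const s1 * T2 + fps_const s2 * T1 + fps_const s3 * D)"
    unfolding Eop_def T1_def T2_def T3_def by simp
  have "Eop (\<lambda>G. V * fps_deriv G) P (of_real (e1+e2)) (of_real (e1*e2)) s1 s2 s3 D $ m
     = T3 $ m + of_real (e1+e2) * T2 $ m + of_real (e1*e2) * T1 $ m"
    unfolding Ed using Pm by simp
  also have "\<dots> = of_nat m * (of_nat m + of_real e1) * (of_nat m + of_real e2) * D $ m"
    using 1 2 3 by (simp add: algebra_simps)
  finally have Em: "Eop (\<lambda>G. V * fps_deriv G) P (of_real (e1+e2)) (of_real (e1*e2)) s1 s2 s3 D $ m
     = of_nat m * (of_nat m + of_real e1) * (of_nat m + of_real e2) * D $ m" .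
  have ne1: "(of_nat m + complex_of_real e1) \<noteq> 0"
  proof
    assume "of_nat m + complex_of_real e1 = 0"
    then have "complex_of_real (real m + e1) = 0" by simp
    then have "real m + e1 = 0" by (simp only: of_real_eq_0_iff)
    then show False using m1 e1 by simp
  qed
  have ne2: "(of_nat m + complex_of_real e2) \<noteq> 0"
  proof
    assume "of_nat m + complex_of_real e2 = 0"
    then have "complex_of_real (real m + e2) = 0" by simp
    then have "real m + e2 = 0" by (simp only: of_real_eq_0_iff)
    then show False using m1 e2 by simp
  qed
  have "(of_nat m :: complex) \<noteq> 0" using m1 by simp
  then have "of_nat m * (of_nat m + complex_of_real e1) * (of_nat m + of_real e2) * D $ m \<noteq> 0"
    using ne1 ne2 dm by simp
  then show False using Em E by simp
qed

lemma step_ring: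
  fixes Q V A u p1 Y Yk p uk qb ck cb du dQ dp dY dYk :: "'a::comm_ring_1"
  assumes QV: "Q * V = A" and r1: "u * Q * (V * dY) = p1 * Y"
    and rk': "u * uk * (Q * qb) * Yk = p * Y"
    and D: "(u * uk * (Q * qb)) * dYk + (u * uk * (cb * dQ * qb) + ck * du * uk * (Q * qb)) * Yk = p * dY + dp * Y"
  shows "u * u * uk * (Q * Q * Q * qb) * (V * dYk) =
     (A*(u*Q*dp - ck * du * Q * p - cb * u * dQ * p) + Q*p*p1) * Y"
proof -
  have D': "(u * uk * (Q * qb)) * dYk = p * dY + dp * Y - (u * uk * (cb * dQ * qb) + ck * du * uk * (Q * qb)) * Yk"
    using D by (simp add: eq_diff_eq)
  have "u * u * uk * (Q * Q * Q * qb) * (V * dYk) = u * Q * (Q * V) * ((u * uk * (Q * qb)) * dYk)"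
    by (simp add: algebra_simps)
  also have "\<dots> = Q * p * (u * Q * (V * dY)) + u * Q * (Q * V) * dp * Y 
      - (Q * V) * (cb * u * dQ + ck * du * Q) * (u * uk * (Q * qb) * Yk)"
    unfolding D' by (simp add: algebra_simps)
  also have "\<dots> = (A*(u*Q*dp - ck * du * Q * p - cb * u * dQ * p) + Q*p*p1) * Y"
    unfolding r1 rk' QV by (simp add: algebra_simps)
  finally show ?thesis .
qed

lemma step_lemma:
  fixes Q V A u p1 Y Yk p :: "complex fps"
  assumes QV: "Q * V = A" and r1: "u * Q * (V * fps_deriv Y) = p1 * Y"
    and rk: "u^(Suc k) * Q^(Suc b) * Yk = p * Y"
  shows "u^(Suc k + 1) * Q^(Suc b + 2) * (V * fps_deriv Yk) =
     (A*(u*Q*fps_deriv p - fps_const (of_nat (Suc k)) * fps_deriv u * Q * p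
        - fps_const (of_nat (Suc b)) * u * fps_deriv Q * p) + Q*p*p1) * Y"
proof -
  define uk where "uk = u^k"
  define qb where "qb = Q^b"
  have rk': "u * uk * (Q * qb) * Yk = p * Y" using rk by (simp add: uk_def qb_def mult.assoc)
  have du: "fps_deriv (u^(Suc k)) = fps_const (of_nat (Suc k)) * fps_deriv u * uk"
    using fps_deriv_power[of u "Suc k"] by (simp add: uk_def)
  have dq: "fps_deriv (Q^(Suc b)) = fps_const (of_nat (Suc b)) * fps_deriv Q * qb"
    using fps_deriv_power[of Q "Suc b"] by (simp add: qb_def)
  have pu: "u^(Suc k) = u * uk" and pq: "Q^(Suc b) = Q * qb" by (simp_all add: uk_def qb_def)
  have "fps_deriv (u^(Suc k) * Q^(Suc b) * Yk) = fps_deriv (p * Y)" using rk by simp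
  then have "(u^(Suc k) * Q^(Suc b)) * fps_deriv Yk + (u^(Suc k) * fps_deriv (Q^(Suc b)) + fps_deriv (u^(Suc k)) * Q^(Suc b)) * Yk
     = p * fps_deriv Y + fps_deriv p * Y"
    by (simp only: fps_deriv_mult)
  then have D: "(u * uk * (Q * qb)) * fps_deriv Yk + (u * uk * (fps_const (of_nat (Suc b)) * fps_deriv Q * qb) + fps_const (of_nat (Suc k)) * fps_deriv u * uk * (Q * qb)) * Yk
     = p * fps_deriv Y + fps_deriv p * Y"
    unfolding du dq by (simp only: pu pq)
  have goal: "u * u * uk * (Q * Q * Q * qb) * (V * fps_deriv Yk) =
     (A*(u*Q*fps_deriv p - fps_const (of_nat (Suc k)) * fps_deriv u * Q * p
        - fps_const (of_nat (Suc b)) * u * fps_deriv Q * p) + Q*p*p1) * Y"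
    by (rule step_ring[OF QV r1 rk' D])
  then show ?thesis by (simp add: uk_def qb_def algebra_simps)
qed

lemma binom_one_plus_X:
  fixes c :: complex
  shows "(1 + fps_X) * fps_deriv (fps_binomial c) = fps_const c * fps_binomial c"
proof -
  have u: "(1 + fps_X :: complex fps) $ 0 \<noteq> 0" by simp
  have "(1 + fps_X) * fps_deriv (fps_binomial c) = (1 + fps_X) * (fps_const c * fps_binomial c * inverse (1 + fps_X))"
    by (simp add: fps_binomial_deriv fps_divide_unit[OF u])
  also have "\<dots> = fps_const c * fps_binomial c * ((1 + fps_X) * inverse (1 + fps_X))" by (simp add: ac_simps)
  also have "\<dots> = fps_const c * fps_binomial c" using inverse_mult_eq_1'[OF u] by simp
  finally show ?thesis .
qed

lemma binom_ode:
  fixes c :: complex and W :: "complex fps"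
  assumes W0: "W $ 0 = 0"
  shows "(1 + W) * fps_deriv (fps_binomial c oo W) = fps_const c * fps_deriv W * (fps_binomial c oo W)"
proof -
  have "(1 + W) * fps_deriv (fps_binomial c oo W) = (((1 + fps_X) * fps_deriv (fps_binomial c)) oo W) * fps_deriv W"
    by (simp add: fps_compose_deriv[OF W0] fps_compose_mult_distrib[OF W0] fps_compose_add_distrib W0)
  also have "((1 + fps_X) * fps_deriv (fps_binomial c)) oo W = (fps_const c * fps_binomial c) oo W"
    by (simp only: binom_one_plus_X)
  also have "(fps_const c * fps_binomial c) oo W = fps_const c * (fps_binomial c oo W)"
    by (simp add: fps_compose_mult_distrib[OF W0])
  finally show ?thesis by (simp add: ac_simps)
qed

definition Pp :: "(int list \<times> int) list \<Rightarrow> int list" where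
  "Pp ps = foldr (\<lambda>(P,k) acc. pmul P acc) ps [1]"

fun Lint :: "(int list \<times> int) list \<Rightarrow> int list" where
 "Lint [] = []" | "Lint ((P,k)#rest) = padd (psc k (pmul (pder P) (Pp rest))) (pmul P (Lint rest))"

definition bprod :: "int \<Rightarrow> (int list \<times> int) list \<Rightarrow> complex fps" where
  "bprod d ps = foldr (\<lambda>(P,k) acc. (fps_binomial (of_int k / of_int d) oo (ev P - 1)) * acc) ps 1"

lemma Pp_simps[simp]: "Pp [] = [1]" "Pp ((P,k)#rest) = pmul P (Pp rest)"
  by (simp_all add: Pp_def)
lemma bprod_simps[simp]: "bprod d [] = 1"
  "bprod d ((P,k)#rest) = (fps_binomial (of_int k / of_int d) oo (ev P - 1)) * bprod d rest"
  by (simp_all add: bprod_def)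

lemma bprod_0: "(\<forall>x\<in>set ps. hd (fst x) = 1 \<and> fst x \<noteq> []) \<Longrightarrow> bprod d ps $ 0 = 1"
proof (induction ps)
  case Nil then show ?case by simp
next
  case (Cons a ps)
  obtain P k where a: "a = (P, k)" by force
  then show ?case using Cons by simp
qed

lemma ev_hd1: "P \<noteq> [] \<Longrightarrow> hd P = 1 \<Longrightarrow> (ev P - 1) $ 0 = 0"
  by (cases P) auto

lemma bprod_deriv:
  assumes d: "d \<noteq> 0" and hd: "\<forall>x\<in>set ps. hd (fst x) = 1 \<and> fst x \<noteq> []"
  shows "fps_const (of_int d) * ev (Pp ps) * fps_deriv (bprod d ps) = ev (Lint ps) * bprod d ps"
  using hd
proof (induction ps)
  case Nil then show ?case by simp
next
  case (Cons a rest)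
  obtain P k where a: "a = (P, k)" by force
  have P: "P \<noteq> []" "hd P = 1" using Cons.prems a by auto
  define W where "W = ev P - 1"
  have W0: "W $ 0 = 0" unfolding W_def using ev_hd1[OF P] .
  define B where "B = fps_binomial (of_int k / of_int d) oo W"
  define R where "R = bprod d rest"
  have IH: "fps_const (of_int d) * ev (Pp rest) * fps_deriv R = ev (Lint rest) * R"
    using Cons a unfolding R_def by auto
  have EW: "ev P = 1 + W" unfolding W_def by simp
  have bo: "(1 + W) * fps_deriv B = fps_const (of_int k / of_int d) * fps_deriv W * B"
    unfolding B_def by (rule binom_ode[OF W0])
  have dd: "fps_const (of_int d :: complex) * fps_const (of_int k / of_int d) = fps_const (of_int k)"
    using d by (simp flip: fps_const_mult)
  have bo': "fps_const (of_int d) * ((1 + W) * fps_deriv B) = fps_const (of_int k) * fps_deriv W * B"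
    unfolding bo by (simp flip: dd add: ac_simps)
  have "fps_const (of_int d) * ev (Pp (a # rest)) * fps_deriv (bprod d (a # rest))
     = (fps_const (of_int d) * ((1 + W) * fps_deriv B)) * (ev (Pp rest) * R)
       + (1 + W) * B * (fps_const (of_int d) * ev (Pp rest) * fps_deriv R)"
    by (simp add: a EW B_def[symmetric] W_def[symmetric] R_def[symmetric] algebra_simps)
  also have "\<dots> = ev (Lint (a # rest)) * bprod d (a # rest)"
    unfolding bo' IH by (simp add: a EW B_def[symmetric] W_def[symmetric] R_def[symmetric] algebra_simps)
  finally show ?case .
qed

definition Snl :: "int \<Rightarrow> int list \<Rightarrow> (int list \<times> int) list \<Rightarrow> int list" where
  "Snl d U0 ps = padd (psc d (pmul (pder U0) (Pp ps))) (pmul U0 (Lint ps))"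

lemma Y_deriv:
  assumes d: "d \<noteq> 0" and hd: "\<forall>x\<in>set ps. hd (fst x) = 1 \<and> fst x \<noteq> []"
  shows "fps_const (of_int d) * ev (pmul U0 (Pp ps)) * fps_deriv (ev U0 * bprod d ps) = ev (Snl d U0 ps) * (ev U0 * bprod d ps)"
proof -
  note bd = bprod_deriv[OF d hd]
  have "fps_const (of_int d) * ev (pmul U0 (Pp ps)) * fps_deriv (ev U0 * bprod d ps)
    = fps_const (of_int d) * fps_deriv (ev U0) * ev (Pp ps) * ev U0 * bprod d ps
      + ev U0 * ev U0 * (fps_const (of_int d) * ev (Pp ps) * fps_deriv (bprod d ps))"
    by (simp add: algebra_simps)
  also have "\<dots> = ev (Snl d U0 ps) * (ev U0 * bprod d ps)"
    unfolding bd by (simp add: Snl_def algebra_simps)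
  finally show ?thesis .
qed

lemma fin_ring:
  fixes u Q Y Y1 Y2 Y3 p1 p2 p3 Pc Dn N K be ga sx1 sx2 sx3 kbe kga ks1 ks2 ks3 :: "'a::comm_ring_1"
  assumes r1: "u*Q*Y1 = p1*Y" and r2: "u^2*Q^3*Y2 = p2*Y" and r3: "u^3*Q^5*Y3 = p3*Y" and PD: "Pc*Dn = N"
   and c: "K*be = kbe" "K*ga = kga" "K * sx1 = ks1" "K * sx2 = ks2" "K * sx3 = ks3"
  shows "K*u^3*Q^5*Dn*(Y3 + be*Y2 + ga*Y1 - Pc*(Y3 + sx1*Y2 + sx2*Y1 + sx3*Y))
     = (Dn*(K*p3 + kbe*(u*Q^2)*p2 + kga*(u^2*Q^4)*p1) - N*(K*p3 + ks1*(u*Q^2)*p2 + ks2*(u^2*Q^4)*p1 + ks3*(u^3*Q^5)))*Y"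
proof -
  have h2: "u^3*Q^5*Y2 = u*Q^2*p2*Y"
  proof -
    have "u^3*Q^5*Y2 = u*Q^2*(u^2*Q^3*Y2)" by (simp add: algebra_simps power_numeral_reduce)
    then show ?thesis unfolding r2 by (simp add: ac_simps)
  qed
  have h1: "u^3*Q^5*Y1 = u^2*Q^4*p1*Y"
  proof -
    have "u^3*Q^5*Y1 = u^2*Q^4*(u*Q*Y1)" by (simp add: algebra_simps power_numeral_reduce)
    then show ?thesis unfolding r1 by (simp add: ac_simps)
  qed
  have "K*u^3*Q^5*Dn*(Y3 + be*Y2 + ga*Y1 - Pc*(Y3 + sx1*Y2 + sx2*Y1 + sx3*Y))
    = Dn*(K*(u^3*Q^5*Y3) + (K*be)*(u^3*Q^5*Y2) + (K*ga)*(u^3*Q^5*Y1))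
      - (Pc*Dn)*(K*(u^3*Q^5*Y3) + (K * sx1)*(u^3*Q^5*Y2) + (K * sx2)*(u^3*Q^5*Y1) + (K * sx3)*(u^3*Q^5*Y))"
    by (simp add: algebra_simps)
  also have "\<dots> = (Dn*(K*p3 + kbe*(u*Q^2)*p2 + kga*(u^2*Q^4)*p1) - N*(K*p3 + ks1*(u*Q^2)*p2 + ks2*(u^2*Q^4)*p1 + ks3*(u^3*Q^5)))*Y"
    unfolding h1 h2 r3 PD c by (simp add: algebra_simps)
  finally show ?thesis .
qed

fun pnth :: "int list \<Rightarrow> nat \<Rightarrow> int" where
  "pnth [] n = 0" | "pnth (x#xs) 0 = x" | "pnth (x#xs) (Suc n) = pnth xs n"

lemma ev_nth: "ev xs $ n = of_int (pnth xs n)"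
  by (induction xs n rule: pnth.induct) auto

definition stepl :: "int list \<Rightarrow> int list \<Rightarrow> int list \<Rightarrow> int list \<Rightarrow> nat \<Rightarrow> nat \<Rightarrow> int list \<Rightarrow> int list" where
  "stepl A Q u p1 k b p = padd (pmul A (psub (psub (pmul (pmul u Q) (pder p))
      (psc (int k) (pmul (pmul (pder u) Q) p))) (psc (int b) (pmul (pmul u (pder Q)) p)))) (pmul (pmul Q p) p1)"

lemma ev_stepl: "ev (stepl A Q u p1 k b p) = ev A * (ev u * ev Q * fps_deriv (ev p) - fps_const (of_nat k) * fps_deriv (ev u) * ev Q * ev p
   - fps_const (of_nat b) * ev u * fps_deriv (ev Q) * ev p) + ev Q * ev p * ev p1"
  by (simp add: stepl_def algebra_simps)

lemma Eop_lin:
  "Eop (\<lambda>G. V * fps_deriv G) P be ga s1 s2 s3 (fps_const k * F - G)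
    = fps_const k * Eop (\<lambda>G. V * fps_deriv G) P be ga s1 s2 s3 F - Eop (\<lambda>G. V * fps_deriv G) P be ga s1 s2 s3 G"
  unfolding Eop_def by (simp add: algebra_simps)

lemma fps_div_mult_cancel:
  fixes a b :: "complex fps"
  assumes "b $ 0 \<noteq> 0"
  shows "b * (a / b) = a"
proof -
  have "b * (a / b) = a * (b * inverse b)" by (simp add: fps_divide_unit[OF assms] ac_simps)
  also have "\<dots> = a" using inverse_mult_eq_1'[OF assms] by simp
  finally show ?thesis .
qed

lemma VP_ring:
  fixes q a n dn V Pc :: "'a::comm_ring_1"
  assumes QV: "q * V = a" and PD: "Pc * dn = n" and dPD: "dPc * dn + Pc * ddn = dn'"
    and C1: "q * (n * dn) = a * (dn' * dn - n * ddn)"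
  shows "q * dn * dn * (V * dPc) = q * dn * dn * Pc"
proof -
  have e: "dPc * dn = dn' - Pc * ddn" using dPD by (simp add: eq_diff_eq)
  have "q * dn * dn * (V * dPc) = (q * V) * (dn * (dPc * dn))" by (simp add: ac_simps)
  also have "\<dots> = a * (dn * (dn' - Pc * ddn))" unfolding QV e ..
  also have "\<dots> = a * (dn' * dn - (Pc * dn) * ddn)" by (simp add: algebra_simps)
  also have "\<dots> = q * (n * dn)" unfolding PD C1 ..
  also have "\<dots> = q * dn * dn * Pc" unfolding PD[symmetric] by (simp add: ac_simps)
  finally show ?thesis .
qed

lemma core:
  fixes Al Ql Nl Dl U0 u M :: "int list" and ps :: "(int list \<times> int) list"
    and d K kbe kga ks1 ks2 ks3 :: int and a1 a2 a3 b1 b2 :: real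
  assumes b: "b1 > 0" "b2 > 0"
  and C1: "pzero (psub (pmul Ql (pmul Nl Dl)) (pmul Al (psub (pmul (pder Nl) Dl) (pmul Nl (pder Dl)))))"
  and A01: "pnth Al 0 = 0" "pnth Al 1 = -1" "pnth Ql 0 = -1"
  and N0: "pnth Nl 0 = 0" and D0: "pnth Dl 0 \<noteq> 0" and u0: "pnth u 0 \<noteq> 0" and d: "d \<noteq> 0" and K: "K \<noteq> 0"
  and hd: "\<forall>x\<in>set ps. hd (fst x) = 1 \<and> fst x \<noteq> []"
  and C2: "pzero (psub (pmul u Al) (pmul M (psc d (pmul U0 (Pp ps)))))"
  and C3: "let p1 = pmul M (Snl d U0 ps); p2 = stepl Al Ql u p1 1 1 p1; p3 = stepl Al Ql u p1 2 3 p2 in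
     pzero (psub (pmul Dl (padd (padd (psc K p3) (psc kbe (pmul (pmul u (ppow Ql 2)) p2))) (psc kga (pmul (pmul (ppow u 2) (ppow Ql 4)) p1))))
       (pmul Nl (padd (padd (padd (psc K p3) (psc ks1 (pmul (pmul u (ppow Ql 2)) p2))) (psc ks2 (pmul (pmul (ppow u 2) (ppow Ql 4)) p1))) (psc ks3 (pmul (ppow u 3) (ppow Ql 5))))))"
  and cst: "real_of_int kbe = K * (b1 - 1 + (b2 - 1))" "real_of_int kga = K * ((b1 - 1) * (b2 - 1))"
     "real_of_int ks1 = K * (a1 + a2 + a3)" "real_of_int ks2 = K * (a1 * a2 + a1 * a3 + a2 * a3)"
     "real_of_int ks3 = K * (a1 * a2 * a3)"
  shows "ev U0 * bprod d ps = fps_const (of_int (pnth U0 0)) * (Hc a1 a2 a3 b1 b2 oo (ev Nl / ev Dl))"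
proof -
  define V where "V = ev Al / ev Ql"
  define Pc where "Pc = ev Nl / ev Dl"
  have q0: "ev Ql $ 0 \<noteq> 0" using A01 by (simp add: ev_nth)
  have dn0: "ev Dl $ 0 \<noteq> 0" using D0 by (simp add: ev_nth)
  have QV: "ev Ql * V = ev Al" unfolding V_def by (rule fps_div_mult_cancel[OF q0])
  have PD: "Pc * ev Dl = ev Nl" unfolding Pc_def using fps_div_mult_cancel[OF dn0] by (simp add: ac_simps)
  have V0: "V $ 0 = 0"
  proof -
    have "(ev Ql * V) $ 0 = ev Al $ 0" using QV by simp
    then show ?thesis using A01 by (simp add: ev_nth)
  qed
  have V1: "V $ 1 = 1"
  proof -
    have "(ev Ql * V) $ 1 = ev Al $ 1" using QV by simp
    then show ?thesis using A01 V0 by (simp add: ev_nth fps_mult_nth_1)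
  qed
  have Pc0: "Pc $ 0 = 0"
  proof -
    have "(Pc * ev Dl) $ 0 = ev Nl $ 0" using PD by simp
    then show ?thesis using N0 D0 by (simp add: ev_nth)
  qed
  have VP: "V * fps_deriv Pc = Pc"
  proof -
    have dPD: "fps_deriv Pc * ev Dl + Pc * fps_deriv (ev Dl) = fps_deriv (ev Nl)"
      using arg_cong[OF PD, of fps_deriv] by (simp add: algebra_simps)
    have C1': "ev Ql * (ev Nl * ev Dl) = ev Al * (fps_deriv (ev Nl) * ev Dl - ev Nl * fps_deriv (ev Dl))"
      using ev_pzero[OF C1] by simp
    have eq: "ev Ql * ev Dl * ev Dl * (V * fps_deriv Pc) = ev Ql * ev Dl * ev Dl * Pc"
      by (rule VP_ring[OF QV PD dPD C1'])
    have "(ev Ql * ev Dl * ev Dl) $ 0 \<noteq> 0" using q0 dn0 by simp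
    then have nz: "ev Ql * ev Dl * ev Dl \<noteq> 0" by auto
    show ?thesis using eq nz by simp
  qed
  define Y where "Y = ev U0 * bprod d ps"
  define Y1 where "Y1 = V * fps_deriv Y"
  define Y2 where "Y2 = V * fps_deriv Y1"
  define Y3 where "Y3 = V * fps_deriv Y2"
  define p1 where "p1 = pmul M (Snl d U0 ps)"
  define p2 where "p2 = stepl Al Ql u p1 1 1 p1"
  define p3 where "p3 = stepl Al Ql u p1 2 3 p2"
  have Yd: "fps_const (of_int d) * ev (pmul U0 (Pp ps)) * fps_deriv Y = ev (Snl d U0 ps) * Y"
    unfolding Y_def by (rule Y_deriv[OF d hd])
  have C2': "ev u * ev Al = ev M * (fps_const (of_int d) * ev (pmul U0 (Pp ps)))"
    using ev_pzero[OF C2] by simp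
  have r1: "ev u * ev Ql * (V * fps_deriv Y) = ev p1 * Y"
  proof -
    have "ev u * ev Ql * (V * fps_deriv Y) = (ev u * (ev Ql * V)) * fps_deriv Y" by (simp add: ac_simps)
    also have "\<dots> = ev M * (fps_const (of_int d) * ev (pmul U0 (Pp ps)) * fps_deriv Y)"
      unfolding QV C2' by (simp add: ac_simps)
    also have "\<dots> = ev p1 * Y" unfolding Yd p1_def by (simp add: ac_simps)
    finally show ?thesis .
  qed
  have r1': "ev u ^ Suc 0 * ev Ql ^ Suc 0 * Y1 = ev p1 * Y" using r1 unfolding Y1_def by simp
  have r2: "ev u ^ (Suc 0 + 1) * ev Ql ^ (Suc 0 + 2) * Y2 = ev p2 * Y"
    unfolding Y2_def p2_def ev_stepl using step_lemma[OF QV r1 r1'] by simp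
  have r2': "ev u ^ Suc 1 * ev Ql ^ Suc 2 * Y2 = ev p2 * Y" using r2 by (simp add: numeral_eq_Suc)
  have r3: "ev u ^ (Suc 1 + 1) * ev Ql ^ (Suc 2 + 2) * Y3 = ev p3 * Y"
    unfolding Y3_def p3_def ev_stepl using step_lemma[OF QV r1 r2'] by (simp add: numeral_eq_Suc)
  have r2'': "ev u ^ 2 * ev Ql ^ 3 * Y2 = ev p2 * Y" using r2 by (simp add: numeral_eq_Suc)
  have r3'': "ev u ^ 3 * ev Ql ^ 5 * Y3 = ev p3 * Y" using r3 by (simp add: numeral_eq_Suc)
  have r1'': "ev u * ev Ql * Y1 = ev p1 * Y" using r1 unfolding Y1_def by simp
  define be where "be = complex_of_real (b1 - 1 + (b2 - 1))"
  define ga where "ga = complex_of_real ((b1 - 1) * (b2 - 1))"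
  define s1 where "s1 = complex_of_real (a1 + a2 + a3)"
  define s2 where "s2 = complex_of_real (a1 * a2 + a1 * a3 + a2 * a3)"
  define s3 where "s3 = complex_of_real (a1 * a2 * a3)"
  have ci: "\<And>x k. real_of_int k = real_of_int K * x \<Longrightarrow> complex_of_int K * complex_of_real x = complex_of_int k"
  proof -
    fix x k assume h: "real_of_int k = real_of_int K * x"
    have "complex_of_int K * complex_of_real x = complex_of_real (real_of_int K * x)" by simp
    also have "\<dots> = complex_of_real (real_of_int k)" using h by simp
    also have "\<dots> = complex_of_int k" by simp
    finally show "complex_of_int K * complex_of_real x = complex_of_int k" .
  qed
  have cc: "fps_const (of_int K) * fps_const be = fps_const (of_int kbe)"
     "fps_const (of_int K) * fps_const ga = fps_const (of_int kga)"
     "fps_const (of_int K) * fps_const s1 = fps_const (of_int ks1)"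
     "fps_const (of_int K) * fps_const s2 = fps_const (of_int ks2)"
     "fps_const (of_int K) * fps_const s3 = fps_const (of_int ks3)"
    unfolding be_def ga_def s1_def s2_def s3_def fps_const_mult[symmetric]
    using ci[OF cst(1)] ci[OF cst(2)] ci[OF cst(3)] ci[OF cst(4)] ci[OF cst(5)] by simp_all
  have fin: "fps_const (of_int K) * ev u ^ 3 * ev Ql ^ 5 * ev Dl *
      (Y3 + fps_const be * Y2 + fps_const ga * Y1 - Pc * (Y3 + fps_const s1 * Y2 + fps_const s2 * Y1 + fps_const s3 * Y))
     = (ev Dl * (fps_const (of_int K) * ev p3 + fps_const (of_int kbe) * (ev u * ev Ql ^ 2) * ev p2 + fps_const (of_int kga) * (ev u ^ 2 * ev Ql ^ 4) * ev p1)
       - ev Nl * (fps_const (of_int K) * ev p3 + fps_const (of_int ks1) * (ev u * ev Ql ^ 2) * ev p2 + fps_const (of_int ks2) * (ev u ^ 2 * ev Ql ^ 4) * ev p1 + fps_const (of_int ks3) * (ev u ^ 3 * ev Ql ^ 5))) * Y"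
    by (rule fin_ring[OF r1'' r2'' r3'' PD cc])
  have brk: "(ev Dl * (fps_const (of_int K) * ev p3 + fps_const (of_int kbe) * (ev u * ev Ql ^ 2) * ev p2 + fps_const (of_int kga) * (ev u ^ 2 * ev Ql ^ 4) * ev p1)
       - ev Nl * (fps_const (of_int K) * ev p3 + fps_const (of_int ks1) * (ev u * ev Ql ^ 2) * ev p2 + fps_const (of_int ks2) * (ev u ^ 2 * ev Ql ^ 4) * ev p1 + fps_const (of_int ks3) * (ev u ^ 3 * ev Ql ^ 5))) = 0"
    using ev_pzero[OF C3[unfolded Let_def p1_def[symmetric] p2_def[symmetric] p3_def[symmetric]]]
    by (simp add: algebra_simps)
  have "(fps_const (of_int K) * ev u ^ 3 * ev Ql ^ 5 * ev Dl) $ 0 \<noteq> (0 :: complex)"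
    using K u0 q0 dn0 by (simp add: ev_nth fps_nth_power_0)
  then have nz: "fps_const (of_int K) * ev u ^ 3 * ev Ql ^ 5 * ev Dl \<noteq> (0 :: complex fps)" by auto
  have EY: "Eop (\<lambda>G. V * fps_deriv G) Pc be ga s1 s2 s3 Y = 0"
    using fin brk nz unfolding Eop_def Y1_def[symmetric] Y2_def[symmetric] Y3_def[symmetric] by simp
  define G where "G = Hc a1 a2 a3 b1 b2 oo Pc"
  have EG: "Eop (\<lambda>G. V * fps_deriv G) Pc be ga s1 s2 s3 G = 0"
    unfolding G_def compose_Eop[OF Pc0 VP] be_def ga_def s1_def s2_def s3_def
    using HE_zero[OF b, of a1 a2 a3] by simp
  define Df where "Df = fps_const (of_int (pnth U0 0)) * G - Y"
  have ED: "Eop (\<lambda>G. V * fps_deriv G) Pc be ga s1 s2 s3 Df = 0"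
    unfolding Df_def Eop_lin EG EY by simp
  have Y0: "Y $ 0 = of_int (pnth U0 0)" unfolding Y_def using bprod_0[OF hd] by (simp add: ev_nth)
  have G0: "G $ 0 = 1" unfolding G_def by (simp add: Hc_def coef_def)
  have Df0: "Df $ 0 = 0" unfolding Df_def using Y0 G0 by simp
  have "Df = 0"
    by (rule Eop_unique[OF V0 V1 Pc0 _ _ ED[unfolded be_def ga_def] Df0]) (use b in auto)
  then show ?thesis unfolding Df_def G_def Y_def Pc_def by simp
qed

lemma coef_ratio_bound:
  assumes a: "\<bar>a1\<bar> \<le> 2" "\<bar>a2\<bar> \<le> 2" "\<bar>a3\<bar> \<le> 2" and b: "b1 \<ge> 1/2" "b2 \<ge> 1/2"
  shows "\<bar>coef a1 a2 a3 b1 b2 (Suc n)\<bar> \<le> 32 * \<bar>coef a1 a2 a3 b1 b2 n\<bar>"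
proof -
  let ?c = "coef a1 a2 a3 b1 b2"
  define be where "be = (b1 + real n) * (b2 + real n) * (real n + 1)"
  define al where "al = (a1 + real n) * (a2 + real n) * (a3 + real n)"
  have eq: "?c (Suc n) * be = ?c n * al"
    using coef_Suc[of b1 b2 a1 a2 a3 n] b unfolding be_def al_def by (simp add: add.commute)
  have x: "\<bar>a1 + real n\<bar> \<le> real n + 2" "\<bar>a2 + real n\<bar> \<le> real n + 2" "\<bar>a3 + real n\<bar> \<le> real n + 2"
    using a by auto
  have "\<bar>al\<bar> \<le> (real n + 2) * (real n + 2) * (real n + 2)"
    unfolding al_def abs_mult
    by (intro mult_mono x) auto
  also have "\<dots> \<le> 32 * ((real n + 1/2) * (real n + 1/2) * (real n + 1))"
  proof -
    have e: "32 * ((real n + 1/2) * (real n + 1/2) * (real n + 1)) - (real n + 2) * (real n + 2) * (real n + 2)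
       = real n * (31 * real n * real n + 58 * real n + 28)" by (simp add: algebra_simps)
    have "real n * (31 * real n * real n + 58 * real n + 28) \<ge> 0" by simp
    then show ?thesis using e by linarith
  qed
  also have "\<dots> \<le> 32 * be"
    unfolding be_def using b by (intro mult_left_mono mult_mono) auto
  finally have al_le: "\<bar>al\<bar> \<le> 32 * be" .
  have bepos: "be > 0" unfolding be_def using b by auto
  have "\<bar>?c (Suc n)\<bar> * be = \<bar>?c n\<bar> * \<bar>al\<bar>" using eq bepos
    by (metis abs_mult abs_of_pos)
  also have "\<dots> \<le> \<bar>?c n\<bar> * (32 * be)" by (intro mult_left_mono al_le) auto
  finally have "\<bar>?c (Suc n)\<bar> * be \<le> (32 * \<bar>?c n\<bar>) * be" by (simp add: ac_simps)
  then show ?thesis using bepos by simp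
qed

lemma Hc_radius:
  assumes a: "\<bar>a1\<bar> \<le> 2" "\<bar>a2\<bar> \<le> 2" "\<bar>a3\<bar> \<le> 2" and b: "b1 \<ge> 1/2" "b2 \<ge> 1/2"
  shows "fps_conv_radius (Hc a1 a2 a3 b1 b2) \<ge> ereal (1/64)"
proof -
  let ?c = "coef a1 a2 a3 b1 b2"
  have "summable (\<lambda>n. fps_nth (Hc a1 a2 a3 b1 b2) n * (complex_of_real (1/64)) ^ n)"
  proof (rule summable_ratio_test[of "1/2" 0])
    fix n :: nat
    have "norm (fps_nth (Hc a1 a2 a3 b1 b2) (Suc n) * complex_of_real (1/64) ^ Suc n)
        = \<bar>?c (Suc n)\<bar> * (1/64) ^ Suc n"
      by (simp add: Hc_def norm_mult norm_power)
    also have "\<dots> \<le> (32 * \<bar>?c n\<bar>) * (1/64) ^ Suc n"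
      by (intro mult_right_mono coef_ratio_bound[OF a b]) auto
    also have "\<dots> = 1/2 * (\<bar>?c n\<bar> * (1/64) ^ n)" by simp
    also have "\<dots> = 1/2 * norm (fps_nth (Hc a1 a2 a3 b1 b2) n * complex_of_real (1/64) ^ n)"
      by (simp add: Hc_def norm_mult norm_power)
    finally show "norm (fps_nth (Hc a1 a2 a3 b1 b2) (Suc n) * complex_of_real (1/64) ^ Suc n)
        \<le> 1/2 * norm (fps_nth (Hc a1 a2 a3 b1 b2) n * complex_of_real (1/64) ^ n)" .
  qed simp
  then have "conv_radius (fps_nth (Hc a1 a2 a3 b1 b2)) \<ge> norm (complex_of_real (1/64))"
    by (rule conv_radius_geI)
  then show ?thesis by (simp add: fps_conv_radius_def)
qed

lemma Hc_eval_real: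
  assumes r: "ereal \<bar>r\<bar> < fps_conv_radius (Hc a1 a2 a3 b1 b2)"
  shows "eval_fps (Hc a1 a2 a3 b1 b2) (complex_of_real r) = complex_of_real (hyp3F2 a1 a2 a3 b1 b2 r)"
proof -
  have "(\<lambda>n. fps_nth (Hc a1 a2 a3 b1 b2) n * complex_of_real r ^ n) sums eval_fps (Hc a1 a2 a3 b1 b2) (complex_of_real r)"
    by (rule sums_eval_fps) (use r in simp)
  then have s: "(\<lambda>n. complex_of_real (coef a1 a2 a3 b1 b2 n * r ^ n)) sums eval_fps (Hc a1 a2 a3 b1 b2) (complex_of_real r)"
    by (simp add: Hc_def)
  then have "summable (\<lambda>n. complex_of_real (coef a1 a2 a3 b1 b2 n * r ^ n))" by (rule sums_summable)
  then have "summable (\<lambda>n. coef a1 a2 a3 b1 b2 n * r ^ n)" by (simp only: summable_of_real_iff)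
  then have "(\<lambda>n. coef a1 a2 a3 b1 b2 n * r ^ n) sums hyp3F2 a1 a2 a3 b1 b2 r"
    unfolding hyp3F2_def coef_def by (rule summable_sums)
  then have "(\<lambda>n. complex_of_real (coef a1 a2 a3 b1 b2 n * r ^ n)) sums complex_of_real (hyp3F2 a1 a2 a3 b1 b2 r)"
    by (simp only: sums_of_real_iff)
  then show ?thesis using s sums_unique2 by blast
qed

fun rprod :: "int \<Rightarrow> (int list \<times> int) list \<Rightarrow> complex \<Rightarrow> complex" where
  "rprod d [] z = 1"
| "rprod d ((P,k)#rest) z = (1 + (evf P z - 1)) powr (of_int k / of_int d) * rprod d rest z"

fun rprodr :: "int \<Rightarrow> (int list \<times> int) list \<Rightarrow> real \<Rightarrow> real" where
  "rprodr d [] x = 1"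
| "rprodr d ((P,k)#rest) x = evr P x powr (of_int k / of_int d) * rprodr d rest x"

lemma rprod_expansion:
  assumes hd: "\<forall>x\<in>set ps. hd (fst x) = 1 \<and> fst x \<noteq> []"
  shows "rprod d ps has_fps_expansion bprod d ps"
  using hd
proof (induction ps)
  case Nil
  have "(\<lambda>z. 1::complex) has_fps_expansion 1" by simp
  then show ?case by (simp add: fun_eq_iff)
next
  case (Cons a rest)
  obtain P k where a: "a = (P, k)" by force
  have P: "P \<noteq> []" "hd P = 1" using Cons.prems a by auto
  have W: "(\<lambda>z. evf P z - 1) has_fps_expansion ev P - 1"
    by (intro has_fps_expansion_diff evf_expansion) simp
  have W0: "(ev P - 1) $ 0 = 0" using ev_hd1[OF P] .
  have B: "((\<lambda>x. (1 + x) powr (of_int k / of_int d)) \<circ> (\<lambda>z. evf P z - 1)) has_fps_expansion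
       (fps_binomial (of_int k / of_int d) oo (ev P - 1))"
    by (rule has_fps_expansion_compose[OF has_fps_expansion_binomial_complex W W0])
  have IH: "rprod d rest has_fps_expansion bprod d rest" using Cons a by auto
  have "(\<lambda>z. ((\<lambda>x. (1 + x) powr (of_int k / of_int d)) \<circ> (\<lambda>z. evf P z - 1)) z * rprod d rest z) has_fps_expansion
      (fps_binomial (of_int k / of_int d) oo (ev P - 1)) * bprod d rest"
    by (rule has_fps_expansion_mult[OF B IH])
  then show ?case by (simp add: a o_def)
qed

lemma rprod_real:
  assumes "\<forall>x\<in>set ps. evr (fst x) t > 0"
  shows "rprod d ps (complex_of_real t) = complex_of_real (rprodr d ps t)"
  using assms
proof (induction ps)
  case Nil then show ?case by simp
next
  case (Cons a rest)
  obtain P k where a: "a = (P, k)" by force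
  have pos: "evr P t > 0" using Cons.prems a by auto
  have "(1 + (evf P (complex_of_real t) - 1)) powr (complex_of_int k / complex_of_int d)
     = complex_of_real (evr P t) powr complex_of_real (real_of_int k / real_of_int d)"
    by (simp add: evf_of_real)
  also have "\<dots> = complex_of_real (evr P t powr (real_of_int k / real_of_int d))"
    by (rule powr_of_real) (use pos in simp)
  finally show ?case using Cons a by simp
qed

lemma same_expansion:
  fixes f g :: "complex \<Rightarrow> complex"
  assumes "f has_fps_expansion F" "g has_fps_expansion F"
  shows "\<exists>e>0. \<forall>z. norm z < e \<longrightarrow> f z = g z"
proof -
  have "eventually (\<lambda>z. eval_fps F z = f z) (nhds 0)" "eventually (\<lambda>z. eval_fps F z = g z) (nhds 0)"
    using assms by (auto simp: has_fps_expansion_def)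
  then have "eventually (\<lambda>z. f z = g z) (nhds 0)" by eventually_elim simp
  then show ?thesis unfolding eventually_nhds_metric by (simp add: dist_norm)
qed

lemma eventually_real_pos:
  assumes "evr P 0 > 0"
  shows "eventually (\<lambda>x. evr P x > 0) (nhds (0::real))"
proof -
  have "isCont (evr P) 0" using evr_cont[of P] by (simp add: continuous_on_eq_continuous_at)
  then have "(evr P \<longlongrightarrow> evr P 0) (nhds 0)" by (simp add: isCont_def tendsto_nhds_iff)
  then show ?thesis using assms by (rule order_tendstoD)
qed

lemma eventually_all_pos:
  assumes "\<forall>x\<in>set ps. hd (fst x) = 1 \<and> fst x \<noteq> []"
  shows "eventually (\<lambda>t. \<forall>x\<in>set ps. evr (fst x) t > 0) (nhds (0::real))"
  using assms
proof (induction ps)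
  case Nil then show ?case by simp
next
  case (Cons a rest)
  have "evr (fst a) 0 > 0" using Cons.prems by (cases "fst a") (auto simp: evr_0)
  then have "eventually (\<lambda>t. evr (fst a) t > 0) (nhds 0)" by (rule eventually_real_pos)
  moreover have "eventually (\<lambda>t. \<forall>x\<in>set rest. evr (fst x) t > 0) (nhds (0::real))" using Cons by auto
  ultimately show ?case by eventually_elim auto
qed

theorem generic:
  fixes Al Ql Nl Dl U0 u M :: "int list" and ps :: "(int list \<times> int) list"
    and d K kbe kga kp kq kr :: int and a1 a2 a3 b1 b2 :: real
  assumes a: "\<bar>a1\<bar> \<le> 2" "\<bar>a2\<bar> \<le> 2" "\<bar>a3\<bar> \<le> 2" and b: "b1 \<ge> 1/2" "b2 \<ge> 1/2"
  and C1: "pzero (psub (pmul Ql (pmul Nl Dl)) (pmul Al (psub (pmul (pder Nl) Dl) (pmul Nl (pder Dl)))))"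
  and A01: "pnth Al 0 = 0" "pnth Al 1 = -1" "pnth Ql 0 = -1"
  and N0: "pnth Nl 0 = 0" and D0: "pnth Dl 0 \<noteq> 0" and u0: "pnth u 0 \<noteq> 0" and d: "d \<noteq> 0" and K: "K \<noteq> 0"
  and hd: "\<forall>x\<in>set ps. hd (fst x) = 1 \<and> fst x \<noteq> []"
  and C2: "pzero (psub (pmul u Al) (pmul M (psc d (pmul U0 (Pp ps)))))"
  and C3: "let p1 = pmul M (Snl d U0 ps); p2 = stepl Al Ql u p1 1 1 p1; p3 = stepl Al Ql u p1 2 3 p2 in
     pzero (psub (pmul Dl (padd (padd (psc K p3) (psc kbe (pmul (pmul u (ppow Ql 2)) p2))) (psc kga (pmul (pmul (ppow u 2) (ppow Ql 4)) p1))))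
       (pmul Nl (padd (padd (padd (psc K p3) (psc kp (pmul (pmul u (ppow Ql 2)) p2))) (psc kq (pmul (pmul (ppow u 2) (ppow Ql 4)) p1))) (psc kr (pmul (ppow u 3) (ppow Ql 5))))))"
  and cst: "real_of_int kbe = K * (b1 - 1 + (b2 - 1))" "real_of_int kga = K * ((b1 - 1) * (b2 - 1))"
     "real_of_int kp = K * (a1 + a2 + a3)" "real_of_int kq = K * (a1 * a2 + a1 * a3 + a2 * a3)"
     "real_of_int kr = K * (a1 * a2 * a3)"
  shows "\<exists>e>0. \<forall>x. \<bar>x\<bar> < e \<longrightarrow>
     real_of_int (pnth U0 0) * hyp3F2 a1 a2 a3 b1 b2 (evr Nl x / evr Dl x) = evr U0 x * rprodr d ps x"
proof -
  have bpos: "b1 > 0" "b2 > 0" using b by auto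
  have core: "ev U0 * bprod d ps = fps_const (of_int (pnth U0 0)) * (Hc a1 a2 a3 b1 b2 oo (ev Nl / ev Dl))"
    by (rule core[OF bpos C1 A01 N0 D0 u0 d K hd C2 C3 cst])
  have rad: "fps_conv_radius (Hc a1 a2 a3 b1 b2) \<ge> ereal (1/64)" by (rule Hc_radius[OF a b])
  then have radpos: "fps_conv_radius (Hc a1 a2 a3 b1 b2) > 0"
    by (meson ereal_less(2) less_le_trans zero_less_divide_1_iff zero_less_numeral)
  have dn0: "ev Dl $ 0 \<noteq> 0" using D0 by (simp add: ev_nth)
  have Pc0: "(ev Nl / ev Dl) $ 0 = 0"
  proof -
    have "(ev Dl * (ev Nl / ev Dl)) $ 0 = ev Nl $ 0" using fps_div_mult_cancel[OF dn0] by simp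
    then show ?thesis using N0 dn0 by (simp add: ev_nth)
  qed
  have Phi: "(\<lambda>z. evf Nl z / evf Dl z) has_fps_expansion ev Nl / ev Dl"
    by (rule has_fps_expansion_divide'[OF evf_expansion evf_expansion dn0])
  have L: "(eval_fps (Hc a1 a2 a3 b1 b2) \<circ> (\<lambda>z. evf Nl z / evf Dl z)) has_fps_expansion (Hc a1 a2 a3 b1 b2 oo (ev Nl / ev Dl))"
    by (rule has_fps_expansion_compose[OF eval_fps_has_fps_expansion[OF radpos] Phi Pc0])
  have L': "(\<lambda>z. of_int (pnth U0 0) * (eval_fps (Hc a1 a2 a3 b1 b2) \<circ> (\<lambda>z. evf Nl z / evf Dl z)) z) has_fps_expansion ev U0 * bprod d ps"
    unfolding core by (rule has_fps_expansion_cmult_left[OF L])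
  have R: "(\<lambda>z. evf U0 z * rprod d ps z) has_fps_expansion ev U0 * bprod d ps"
    by (rule has_fps_expansion_mult[OF evf_expansion rprod_expansion[OF hd]])
  obtain e1 where e1: "e1 > 0" and eq1: "\<And>z. norm z < e1 \<Longrightarrow>
      of_int (pnth U0 0) * eval_fps (Hc a1 a2 a3 b1 b2) (evf Nl z / evf Dl z) = evf U0 z * rprod d ps z"
    using same_expansion[OF L' R] by auto
  have cq: "isCont (\<lambda>x. evr Nl x / evr Dl x) 0"
  proof -
    have "isCont (evr Nl) 0" "isCont (evr Dl) 0" using evr_cont by (auto simp: continuous_on_eq_continuous_at)
    moreover have "evr Dl 0 \<noteq> 0" using D0 by (cases Dl) (auto simp: evr_0)
    ultimately show ?thesis by (intro continuous_intros)
  qed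
  have q00: "evr Nl 0 / evr Dl 0 = 0" using N0 by (cases Nl) (auto simp: evr_0)
  have "((\<lambda>x. evr Nl x / evr Dl x) \<longlongrightarrow> 0) (nhds 0)"
    using cq q00 by (simp add: isCont_def tendsto_nhds_iff)
  then have "((\<lambda>x. \<bar>evr Nl x / evr Dl x\<bar>) \<longlongrightarrow> 0) (nhds 0)" using tendsto_rabs by fastforce
  then have E1: "eventually (\<lambda>x. \<bar>evr Nl x / evr Dl x\<bar> < 1/64) (nhds (0::real))"
    by (rule order_tendstoD) simp
  have E2: "eventually (\<lambda>t. \<forall>x\<in>set ps. evr (fst x) t > 0) (nhds (0::real))"
    by (rule eventually_all_pos[OF hd])
  have E3: "eventually (\<lambda>x. \<bar>x\<bar> < e1) (nhds (0::real))"
    using e1 unfolding eventually_nhds_metric by (auto simp: dist_real_def)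
  have "eventually (\<lambda>x. real_of_int (pnth U0 0) * hyp3F2 a1 a2 a3 b1 b2 (evr Nl x / evr Dl x) = evr U0 x * rprodr d ps x) (nhds (0::real))"
    using E1 E2 E3
  proof eventually_elim
    case (elim x)
    define r where "r = evr Nl x / evr Dl x"
    have zr: "evf Nl (complex_of_real x) / evf Dl (complex_of_real x) = complex_of_real r"
      unfolding r_def by (simp add: evf_of_real)
    have rr: "ereal \<bar>r\<bar> < fps_conv_radius (Hc a1 a2 a3 b1 b2)"
    proof -
      have "ereal \<bar>r\<bar> < ereal (1/64)" using elim(1) unfolding r_def by simp
      then show ?thesis using rad by (rule less_le_trans)
    qed
    have "complex_of_real (real_of_int (pnth U0 0) * hyp3F2 a1 a2 a3 b1 b2 r)
        = of_int (pnth U0 0) * eval_fps (Hc a1 a2 a3 b1 b2) (evf Nl (complex_of_real x) / evf Dl (complex_of_real x))"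
      unfolding zr Hc_eval_real[OF rr] by simp
    also have "\<dots> = evf U0 (complex_of_real x) * rprod d ps (complex_of_real x)"
      by (rule eq1) (use elim(3) in simp)
    also have "\<dots> = complex_of_real (evr U0 x * rprodr d ps x)"
      using rprod_real[OF elim(2)] by (simp add: evf_of_real)
    finally show ?case unfolding r_def by (simp only: of_real_eq_iff)
  qed
  then show ?thesis unfolding eventually_nhds_metric by (auto simp: dist_real_def)
qed

definition "F1l = [1,5,-8,1::int]"
definition "G0l = [1,-1,1::int]"
definition "G1l = [1,-235,1430,-1695,270,229,1::int]"
definition "Ql = [-1,-510,14631,-80090,218058,-316290,253239,-131562,70998,-37950,8955,522,-1::int]"
definition "Al = pmul (pmul (pmul [0,1] [-1,1]) F1l) (pmul G0l G1l)"
definition "Nl = psc 1728 (pmul (pmul [0,1] [-1,1]) (ppow F1l 7))"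
definition "Dl = pmul (ppow G0l 3) (ppow G1l 3)"

lemma chk_C1: "pzero (psub (pmul Ql (pmul Nl Dl)) (pmul Al (psub (pmul (pder Nl) Dl) (pmul Nl (pder Dl)))))"
  by code_simp

lemma chk_small: "pnth Al 0 = 0" "pnth Al 1 = -1" "pnth Ql 0 = -1" "pnth Nl 0 = 0" "pnth Dl 0 = 1"
  by code_simp+

lemma evr_F1: "evr F1l x = F1 x" by (simp add: F1l_def F1_def algebra_simps power2_eq_square power3_eq_cube)
lemma evr_G0: "evr G0l x = G0 x" by (simp add: G0l_def G0_def algebra_simps power2_eq_square)
lemma evr_G1: "evr G1l x = G1 x"
  by (simp add: G1l_def G1_def algebra_simps power2_eq_square power3_eq_cube numeral_eq_Suc)
lemma evr_Phi: "evr Nl x / evr Dl x = Phi3 x"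
  by (simp add: Nl_def Dl_def Phi3_def evr_F1 evr_G0 evr_G1 algebra_simps)

lemma case1: "\<exists>e>0. \<forall>x::real. \<bar>x\<bar> < e \<longrightarrow>
    hyp3F2 (-1/14) (11/42) (25/42) (4/7) (5/7) (Phi3 x)
      = (1 - 3*x) * (1 - x) powr (3/7) * G0 x powr (-3/14) * G1 x powr (-3/14)"
proof -
  have g: "\<exists>e>0. \<forall>x. \<bar>x\<bar> < e \<longrightarrow>
     real_of_int (pnth [1,-3] 0) * hyp3F2 (-1/14) (11/42) (25/42) (4/7) (5/7) (evr Nl x / evr Dl x)
       = evr [1,-3] x * rprodr 14 [([1,-1],6),(G0l,-3),(G1l,-3)] x"
    apply (rule generic[where Al=Al and Ql=Ql and u="[14,-42]" and M="[0,-1,-5,8,-1]" and K=74088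
       and kbe="-52920" and kga=9072 and kp=58212 and kq=7014 and kr="-825"])
    apply (fact chk_C1 chk_small | code_simp)+
    done
  show ?thesis
  proof (rule ex_forward[OF g], safe)
    fix e x :: real assume h: "\<forall>x. \<bar>x\<bar> < e \<longrightarrow> real_of_int (pnth [1,-3] 0) * hyp3F2 (-1/14) (11/42) (25/42) (4/7) (5/7) (evr Nl x / evr Dl x)
       = evr [1,-3] x * rprodr 14 [([1,-1],6),(G0l,-3),(G1l,-3)] x" and x: "\<bar>x\<bar> < e"
    show "hyp3F2 (-1/14) (11/42) (25/42) (4/7) (5/7) (Phi3 x)
      = (1 - 3*x) * (1 - x) powr (3/7) * G0 x powr (-3/14) * G1 x powr (-3/14)"
      using h[rule_format, OF x] by (simp add: evr_Phi evr_G0 evr_G1 ac_simps)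
  qed
qed

lemma case2: "\<exists>e>0. \<forall>x::real. \<bar>x\<bar> < e \<longrightarrow>
    hyp3F2 (3/14) (23/42) (37/42) (6/7) (9/7) (Phi3 x)
      = (1 - 2*x/3) * (1 - x) powr (-2/7) * F1 x powr (-2) * G0 x powr (9/14) * G1 x powr (9/14)"
proof -
  have g: "\<exists>e>0. \<forall>x. \<bar>x\<bar> < e \<longrightarrow>
     real_of_int (pnth [3,-2] 0) * hyp3F2 (3/14) (23/42) (37/42) (6/7) (9/7) (evr Nl x / evr Dl x)
       = evr [3,-2] x * rprodr 14 [([1,-1],-4),(F1l,-28),(G0l,9),(G1l,9)] x"
    apply (rule generic[where Al=Al and Ql=Ql and u="[42,-28]" and M="[0,-1]" and K=74088
       and kbe="10584" and kga="-3024" and kp=121716 and kq=58422 and kr="7659"])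
    apply (fact chk_C1 chk_small | code_simp)+
    done
  show ?thesis
  proof (rule ex_forward[OF g], safe)
    fix e x :: real assume h: "\<forall>x. \<bar>x\<bar> < e \<longrightarrow> real_of_int (pnth [3,-2] 0) * hyp3F2 (3/14) (23/42) (37/42) (6/7) (9/7) (evr Nl x / evr Dl x)
       = evr [3,-2] x * rprodr 14 [([1,-1],-4),(F1l,-28),(G0l,9),(G1l,9)] x" and x: "\<bar>x\<bar> < e"
    define R where "R = (1 - x) powr (-2/7) * F1 x powr (-2) * G0 x powr (9/14) * G1 x powr (9/14)"
    have "3 * hyp3F2 (3/14) (23/42) (37/42) (6/7) (9/7) (Phi3 x) = (3 - 2*x) * R"
      using h[rule_format, OF x] unfolding R_def by (simp add: evr_Phi evr_F1 evr_G0 evr_G1 ac_simps)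
    then have "hyp3F2 (3/14) (23/42) (37/42) (6/7) (9/7) (Phi3 x) = (1 - 2*x/3) * R"
      by (simp add: algebra_simps)
    then show "hyp3F2 (3/14) (23/42) (37/42) (6/7) (9/7) (Phi3 x)
      = (1 - 2*x/3) * (1 - x) powr (-2/7) * F1 x powr (-2) * G0 x powr (9/14) * G1 x powr (9/14)"
      unfolding R_def by (simp only: mult.assoc)
  qed
qed

lemma case3: "\<exists>e>0. \<forall>x::real. \<bar>x\<bar> < e \<longrightarrow>
    hyp3F2 (5/14) (29/42) (43/42) (8/7) (10/7) (Phi3 x)
      = (1 + x/2) * (1 - x) powr (-1/7) * F1 x powr (-3) * G0 x powr (15/14) * G1 x powr (15/14)"
proof -
  have g: "\<exists>e>0. \<forall>x. \<bar>x\<bar> < e \<longrightarrow>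
     real_of_int (pnth [2,1] 0) * hyp3F2 (5/14) (29/42) (43/42) (8/7) (10/7) (evr Nl x / evr Dl x)
       = evr [2,1] x * rprodr 14 [([1,-1],-2),(F1l,-42),(G0l,15),(G1l,15)] x"
    apply (rule generic[where Al=Al and Ql=Ql and u="[28,14]" and M="[0,-1]" and K=74088
       and kbe="42336" and kga="4536" and kp=153468 and kq=97734 and kr="18705"])
    apply (fact chk_C1 chk_small | code_simp)+
    done
  show ?thesis
  proof (rule ex_forward[OF g], safe)
    fix e x :: real assume h: "\<forall>x. \<bar>x\<bar> < e \<longrightarrow> real_of_int (pnth [2,1] 0) * hyp3F2 (5/14) (29/42) (43/42) (8/7) (10/7) (evr Nl x / evr Dl x)
       = evr [2,1] x * rprodr 14 [([1,-1],-2),(F1l,-42),(G0l,15),(G1l,15)] x" and x: "\<bar>x\<bar> < e"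
    define R where "R = (1 - x) powr (-1/7) * F1 x powr (-3) * G0 x powr (15/14) * G1 x powr (15/14)"
    have "2 * hyp3F2 (5/14) (29/42) (43/42) (8/7) (10/7) (Phi3 x) = (2 + x) * R"
      using h[rule_format, OF x] unfolding R_def by (simp add: evr_Phi evr_F1 evr_G0 evr_G1 ac_simps)
    then have "hyp3F2 (5/14) (29/42) (43/42) (8/7) (10/7) (Phi3 x) = (1 + x/2) * R"
      by (simp add: algebra_simps)
    then show "hyp3F2 (5/14) (29/42) (43/42) (8/7) (10/7) (Phi3 x)
      = (1 + x/2) * (1 - x) powr (-1/7) * F1 x powr (-3) * G0 x powr (15/14) * G1 x powr (15/14)"
      unfolding R_def by (simp only: mult.assoc)
  qed
qed


theorem mainTheorem8:
  shows "\<exists>e>0. \<forall>x::real. \<bar>x\<bar> < e \<longrightarrow>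
    hyp3F2 (-1/14) (11/42) (25/42) (4/7) (5/7) (Phi3 x)
      = (1 - 3*x) * (1 - x) powr (3/7) * G0 x powr (-3/14) * G1 x powr (-3/14)
  \<and> hyp3F2 (3/14) (23/42) (37/42) (6/7) (9/7) (Phi3 x)
      = (1 - 2*x/3) * (1 - x) powr (-2/7) * F1 x powr (-2) * G0 x powr (9/14) * G1 x powr (9/14)
  \<and> hyp3F2 (5/14) (29/42) (43/42) (8/7) (10/7) (Phi3 x)
      = (1 + x/2) * (1 - x) powr (-1/7) * F1 x powr (-3) * G0 x powr (15/14) * G1 x powr (15/14)"
proof -
  obtain e1 where e1: "e1 > 0" "\<And>x::real. \<bar>x\<bar> < e1 \<Longrightarrow> hyp3F2 (-1/14) (11/42) (25/42) (4/7) (5/7) (Phi3 x)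
      = (1 - 3*x) * (1 - x) powr (3/7) * G0 x powr (-3/14) * G1 x powr (-3/14)"
    using case1 by blast
  obtain e2 where e2: "e2 > 0" "\<And>x::real. \<bar>x\<bar> < e2 \<Longrightarrow> hyp3F2 (3/14) (23/42) (37/42) (6/7) (9/7) (Phi3 x)
      = (1 - 2*x/3) * (1 - x) powr (-2/7) * F1 x powr (-2) * G0 x powr (9/14) * G1 x powr (9/14)"
    using case2 by blast
  obtain e3 where e3: "e3 > 0" "\<And>x::real. \<bar>x\<bar> < e3 \<Longrightarrow> hyp3F2 (5/14) (29/42) (43/42) (8/7) (10/7) (Phi3 x)
      = (1 + x/2) * (1 - x) powr (-1/7) * F1 x powr (-3) * G0 x powr (15/14) * G1 x powr (15/14)"
    using case3 by blast
  show ?thesis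
    by (rule exI[of _ "min e1 (min e2 e3)"]) (use e1 e2 e3 in auto)
qed

end
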